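(* For every positive integer $n$ and every complex number $q$ with $0<|q|<1$, \[ \sum_{k=1}^{n}[4k+1]\frac{(q;q^2)_k^3}{(q^2;q^2)_k^3}\frac{(q^{-2n};q^2)_k}{(q^{3+2n};q^2)_k}\,q^{(1+2n)k}\sum_{i=1}^{2k}(-1)^i\frac{q^i}{[i]^2} =\frac{(q,q^3;q^2)_{n}}{(q^2;q^2)_{n}^2}\sum_{j=1}^n\frac{q^{2j}}{[2j]^2}. \]
   Context: For complex $x,q$ and an integer $n\ge 0$, $(x;q)_n=\prod_{i=0}^{n-1}(1-xq^i)$, and $(x_1,\dots,x_r;q)_n=(x_1;q)_n\cdots(x_r;q)_n$. The $q$-integer is $[n]=1+q+\cdots+q^{n-1}=(1-q^n)/(1-q)$. *)

theory Defs
  imports Complex_Main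
begin

definition qpoch :: "complex \<Rightarrow> complex \<Rightarrow> nat \<Rightarrow> complex" where
  "qpoch x q n = (\<Prod>i<n. 1 - x * q ^ i)"

definition qint :: "complex \<Rightarrow> nat \<Rightarrow> complex" where
  "qint q n = (\<Sum>i<n. q ^ i)"

end

theory Submission
  imports Defs
begin

lemma qint_eq: "q \<noteq> 1 \<Longrightarrow> qint q m = (1 - q^m) / (1 - q)"
  unfolding qint_def by (simp add: sum_gp_strict)

lemma nz: "norm (y::complex) < 1 \<Longrightarrow> 1 - y \<noteq> 0"
  by (metis eq_iff_diff_eq_0 norm_one order.irrefl)

lemma qpoch_Suc: "qpoch x b (Suc k) = qpoch x b k * (1 - x * b^k)"
  unfolding qpoch_def by simp

lemma norm_prod_lt: "norm (x::complex) < 1 \<Longrightarrow> norm y \<le> 1 \<Longrightarrow> norm (x*y) < 1"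
proof -
  assume a: "norm x < 1" "norm y \<le> 1"
  have "norm x * norm y \<le> norm x" using a(2) by (simp add: mult_left_le)
  thus ?thesis using a(1) by (simp add: norm_mult)
qed

lemma norm_pow_le: "norm (x::complex) \<le> 1 \<Longrightarrow> norm (x^i) \<le> 1"
  by (simp add: norm_power power_le_one)

lemma norm_pow_lt: "norm (x::complex) < 1 \<Longrightarrow> i > 0 \<Longrightarrow> norm (x^i) < 1"
  by (simp add: norm_power power_less_one_iff)

lemma qpoch_nz:
  assumes "norm x < 1" "norm b \<le> 1"
  shows "qpoch x b k \<noteq> 0"
proof -
  have "\<And>i. 1 - x * b^i \<noteq> 0"
    by (rule nz, rule norm_prod_lt, rule assms(1), rule norm_pow_le, rule assms(2))
  thus ?thesis unfolding qpoch_def by simp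
qed


definition T :: "complex \<Rightarrow> nat \<Rightarrow> nat \<Rightarrow> complex" where
  "T q n k = qint q (4*k+1)
            * (qpoch q (q^2) k)^3 / (qpoch (q^2) (q^2) k)^3
            * qpoch (inverse (q^(2*n))) (q^2) k / qpoch (q^(3+2*n)) (q^2) k
            * q^((1+2*n)*k)"

lemma R1_alg:
  fixes q x a A B C D E :: complex
  assumes "B \<noteq> 0" "D \<noteq> 0" "1 - q^2*x \<noteq> 0" "a \<noteq> 0" "1 - q \<noteq> 0" "1 - q*x^2 \<noteq> 0"
    "1 - q^3*a*x \<noteq> 0"
  shows "(1-q^5*x^2)/(1-q) * (A*(1-q*x))^3/(B*(1-q^2*x))^3 * (C*(1-x/a))/(D*(1-q^3*a*x)) * (E*q*a)
    = (1-q*x^2)/(1-q)*A^3/B^3*C/D*E * ((1-q^5*x^2)/(1-q*x^2)) * ((1-q*x)^3/(1-q^2*x)^3)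
      * (q*(a-x)/(1-q^3*a*x))"
  using assms by (simp add: divide_simps)


lemma nzq:
  assumes "norm (q::complex) < 1" "q \<noteq> 0" "norm y \<le> 1"
  shows "1 - q * y \<noteq> 0" "1 - q^2 * y \<noteq> 0" "1 - q^3 * y \<noteq> 0" "1 - q^5 * y \<noteq> 0"
proof -
  have n1: "norm (q^m) < 1" if "m > 0" for m using norm_pow_lt assms(1) that by blast
  show "1 - q * y \<noteq> 0" by (rule nz, rule norm_prod_lt, fact, fact)
  show "1 - q^2 * y \<noteq> 0" by (rule nz, rule norm_prod_lt, rule n1, simp, fact)
  show "1 - q^3 * y \<noteq> 0" by (rule nz, rule norm_prod_lt, rule n1, simp, fact)
  show "1 - q^5 * y \<noteq> 0" by (rule nz, rule norm_prod_lt, rule n1, simp, fact)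
qed


lemma T_Suc:
  assumes q: "norm q < 1" "q \<noteq> 0" and xa: "x = (q^2)^k" "a = (q^2)^n"
  shows "T q n (Suc k) = T q n k * ((1 - q^5*x^2)/(1 - q*x^2)) * ((1-q*x)^3/(1-q^2*x)^3)
           * (q*(a-x)/(1-q^3*a*x))"
proof -
  have nq2: "norm (q^2) < 1" using norm_pow_lt[OF q(1), of 2] by simp
  have nx: "norm x \<le> 1" unfolding xa by (rule norm_pow_le, rule less_imp_le, rule nq2)
  have na: "norm a \<le> 1" unfolding xa by (rule norm_pow_le, rule less_imp_le, rule nq2)
  have nx2: "norm (x^2) \<le> 1" by (rule norm_pow_le, rule nx)
  have nax: "norm (a*x) \<le> 1" using nx na by (simp add: norm_mult mult_le_one)
  have e1: "q^(4*Suc k+1) = q^5*x^2" unfolding xa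
    by (simp add: power_add power_mult[symmetric] mult.commute)
  have e2: "q^(4*k+1) = q*x^2" unfolding xa
    by (simp add: power_add power_mult[symmetric] mult.commute)
  have e3: "q^((1+2*n)*Suc k) = q^((1+2*n)*k)*q*a" unfolding xa
    by (simp add: power_add power_mult[symmetric] algebra_simps)
  have e4: "inverse (q^(2*n)) * (q^2)^k = x/a" unfolding xa power_mult
    by (simp add: divide_inverse mult.commute)
  have e5: "q^(3+2*n)*(q^2)^k = q^3*a*x" unfolding xa
    by (simp add: power_add power_mult)
  have B: "qpoch (q^2) (q^2) k \<noteq> 0" using qpoch_nz[OF nq2 less_imp_le[OF nq2]] .
  have D: "qpoch (q^(3+2*n)) (q^2) k \<noteq> 0"
    using qpoch_nz[OF norm_pow_lt[OF q(1), of "3+2*n"] less_imp_le[OF nq2]] by simp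
  have a0: "a \<noteq> 0" unfolding xa using q(2) by simp
  have q1: "1 - q \<noteq> 0" using nz[OF q(1)] .
  have q1': "q \<noteq> 1" using q1 by simp
  have f1: "1 - q^2*x \<noteq> 0" using nzq(2)[OF q nx] .
  have f2: "1 - q*x^2 \<noteq> 0" using nzq(1)[OF q nx2] .
  have f3: "1 - q^3*a*x \<noteq> 0" using nzq(3)[OF q nax] by (simp add: mult.assoc)
  have ex: "(1 - inverse (q^(2*n)) * (q^2)^k) = 1 - x/a" using e4 by simp
  have ex2: "1 - q^(3+2*n)*(q^2)^k = 1 - q^3*a*x" using e5 by simp
  have ex3: "1 - q*(q^2)^k = 1 - q*x" "1 - q^2*(q^2)^k = 1 - q^2*x" unfolding xa by simp_all
  show ?thesis
    unfolding T_def qpoch_Suc qint_eq[OF q1'] e1 e2 e3 ex ex2 ex3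
    using R1_alg[OF B D f1 a0 q1 f2 f3] by (simp add: mult.assoc)
qed


lemma T_0: "T q n 0 = 1"
  unfolding T_def qpoch_def qint_def by simp

lemma T_vanish:
  assumes "q \<noteq> 0" "n < k"
  shows "T q n k = 0"
proof -
  have "qpoch (inverse (q^(2*n))) (q^2) k = 0"
    unfolding qpoch_def using assms
    by (auto simp: power_mult[symmetric] intro!: bexI[of _ n])
  thus ?thesis unfolding T_def by simp
qed

lemma R2_alg:
  fixes Tn Tm F q a x p c1 c2 d d' :: complex
  assumes IH: "Tn*x*c1*c2 = Tm*(x-p*a)*d" and d: "d \<noteq> 0" "d' \<noteq> 0"
  shows "Tn*F*(q*(a-x)/d)*(p*x)*c1*c2 = Tm*F*(q*(p*a-x)/d')*(p*x - p*a)*d'"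
proof -
  have "Tn*F*(q*(a-x)/d)*(p*x)*c1*c2 = (Tn*x*c1*c2)*(F*q*(a-x)*p)/d"
    by (simp add: field_simps)
  also have "\<dots> = Tm*(x-p*a)*(F*q*(a-x)*p)" using IH d by simp
  also have "\<dots> = Tm*F*(q*(p*a-x)/d')*(p*x - p*a)*d'" using d by (simp add: field_simps)
  finally show ?thesis .
qed

lemma R2:
  assumes q: "norm q < 1" "q \<noteq> 0"
  shows "T q n k * (q^2)^k * (1 - q^2*(q^2)^n) * (1 - q^3*(q^2)^n)
       = T q (Suc n) k * ((q^2)^k - q^2*(q^2)^n) * (1 - q^3*(q^2)^n*(q^2)^k)"
proof (induction k)
  case 0
  then show ?case by (simp add: T_0)
next
  case (Suc k)
  define x where "x = (q^2)^k"
  define a where "a = (q^2)^n"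
  have nq2: "norm (q^2) < 1" using norm_pow_lt[OF q(1), of 2] by simp
  have nx: "norm x \<le> 1" unfolding x_def by (rule norm_pow_le, rule less_imp_le, rule nq2)
  have na: "norm a \<le> 1" unfolding a_def by (rule norm_pow_le, rule less_imp_le, rule nq2)
  have nax: "norm (a*x) \<le> 1" using nx na by (simp add: norm_mult mult_le_one)
  have npax: "norm (q^2*a*x) \<le> 1"
  proof -
    have "norm (q^2) * norm (a*x) \<le> 1" using nax nq2 by (simp add: mult_le_one)
    thus ?thesis by (simp add: norm_mult mult.assoc)
  qed
  have d: "1 - q^3*a*x \<noteq> 0" using nzq(3)[OF q nax] by (simp add: mult.assoc)
  have d': "1 - q^3*(q^2*a)*x \<noteq> 0" using nzq(3)[OF q npax] by (simp add: mult.assoc)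
  have s1: "T q n (Suc k) = T q n k * ((1 - q^5*x^2)/(1 - q*x^2)) * ((1-q*x)^3/(1-q^2*x)^3)
           * (q*(a-x)/(1-q^3*a*x))" using T_Suc[OF q x_def a_def] .
  have s2: "T q (Suc n) (Suc k) = T q (Suc n) k * ((1 - q^5*x^2)/(1 - q*x^2)) * ((1-q*x)^3/(1-q^2*x)^3)
           * (q*(q^2*a-x)/(1-q^3*(q^2*a)*x))" using T_Suc[OF q x_def, of "q^2*a" "Suc n"] unfolding a_def
    by simp
  have IH: "T q n k * x * (1 - q^2*a) * (1 - q^3*a) = T q (Suc n) k * (x - q^2*a) * (1 - q^3*a*x)"
    using Suc.IH unfolding x_def a_def by (simp add: mult.assoc)
  have "T q n (Suc k) * (q^2*x) * (1 - q^2*a) * (1 - q^3*a)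
       = T q (Suc n) (Suc k) * (q^2*x - q^2*a) * (1 - q^3*(q^2*a)*x)"
    unfolding s1 s2
    using R2_alg[OF IH d d', where F="((1 - q^5*x^2)/(1 - q*x^2)) * ((1-q*x)^3/(1-q^2*x)^3)"
       and q=q] by (simp only: mult.assoc)
  thus ?case unfolding x_def a_def by (simp add: mult.assoc mult.left_commute)
qed


lemma PW1_rat:
  fixes q a x :: complex
  assumes "x \<noteq> 0" "q \<noteq> 0" "1 - q^2*a \<noteq> 0" "1 - q^3*a \<noteq> 0" "1 - q*x^2 \<noteq> 0" "1 - q^5*x^2 \<noteq> 0"
    "1 - q^2*x \<noteq> 0" "1 - q^5*a*x \<noteq> 0" "1 - q^3*a*x \<noteq> 0"
  shows "1 - ((1-q*a)*(1-q^3*a)/(1-q^2*a)^2) * ((x-q^2*a)*(1-q^3*a*x)/(x*(1-q^2*a)*(1-q^3*a)))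
 = (-(q^2*a/(q^2*x))*(1-q^2*x)^3*(1-q^3*a*(q^2*x))/((1-q*(q^2*x)^2)*(1-q^2*a)^3))
   * (((1 - q^5*x^2)/(1 - q*x^2)) * ((1-q*x)^3/(1-q^2*x)^3) * (q*(q^2*a-x)/(1-q^3*(q^2*a)*x)))
   - (-(q^2*a/x)*(1-x)^3*(1-q^3*a*x)/((1-q*x^2)*(1-q^2*a)^3))"
proof -
  have e: "1-q*(q^2*x)^2 = 1 - q^5*x^2" "1-q^3*a*(q^2*x) = 1 - q^5*a*x" "1-q^3*(q^2*a)*x = 1 - q^5*a*x"
    by (simp_all add: power2_eq_square algebra_simps eval_nat_numeral)
  show ?thesis unfolding e using assms by (simp add: divide_simps) algebra
qed



definition cc :: "complex \<Rightarrow> complex \<Rightarrow> complex \<Rightarrow> complex" where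
  "cc q a x = -(q^2*a/x)*(1-x)^3*(1-q^3*a*x)/((1-q*x^2)*(1-q^2*a)^3)"
definition zz :: "complex \<Rightarrow> complex \<Rightarrow> complex \<Rightarrow> complex" where
  "zz q a x = -(q^2*a/((1-q^2*a)/(1-q))^2)*(1-q^3*a*x)*(1-x)/((1-q*x^2)*(1-q^2*a))"
definition bb :: "complex \<Rightarrow> complex \<Rightarrow> complex \<Rightarrow> complex" where
  "bb q a x = ((1 - q^5*x^2)/(1 - q*x^2)) * ((1-q*x)^3/(1-q^2*x)^3) * (q*(q^2*a-x)/(1-q^3*(q^2*a)*x))"
definition hh :: "complex \<Rightarrow> complex \<Rightarrow> complex" where
  "hh q x = q^2*x/((1-q^2*x)/(1-q))^2 - q*x/((1-q*x)/(1-q))^2"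

lemma PW2_s1:
  fixes q a x :: complex
  assumes "x \<noteq> 0" "q \<noteq> 0" "1 - q*x^2 \<noteq> 0" "1 - q^5*x^2 \<noteq> 0"
    "1 - q^2*x \<noteq> 0" "1 - q^5*a*x \<noteq> 0" "1 - q^2*a \<noteq> 0"
  shows "cc q a (q^2*x) * bb q a x = -(q^2*a)*(1-q*x)^3*(q^2*a-x)/(q*x*(1-q*x^2)*(1-q^2*a)^3)"
proof -
  have e: "1-q*(q^2*x)^2 = 1 - q^5*x^2" "1-q^3*a*(q^2*x) = 1 - q^5*a*x" "1-q^3*(q^2*a)*x = 1 - q^5*a*x"
    by (simp_all add: power2_eq_square algebra_simps eval_nat_numeral)
  show ?thesis unfolding cc_def bb_def e using assms by (simp add: divide_simps) algebra
qed

lemma PW2_s2: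
  fixes q a x :: complex
  assumes "x \<noteq> 0" "q \<noteq> 0" "1 - q*x^2 \<noteq> 0" "1 - q^5*x^2 \<noteq> 0"
    "1 - q^2*x \<noteq> 0" "1 - q^5*a*x \<noteq> 0" "1 - q^2*a \<noteq> 0" "1 - q \<noteq> 0"
  shows "zz q a (q^2*x) * bb q a x = -(q^2*a/((1-q^2*a)/(1-q))^2)*q*(1-q*x)^3*(q^2*a-x)/((1-q*x^2)*(1-q^2*a)*(1-q^2*x)^2)"
proof -
  have e: "1-q*(q^2*x)^2 = 1 - q^5*x^2" "1-q^3*a*(q^2*x) = 1 - q^5*a*x" "1-q^3*(q^2*a)*x = 1 - q^5*a*x"
    by (simp_all add: power2_eq_square algebra_simps eval_nat_numeral)
  show ?thesis unfolding zz_def bb_def e using assms by (simp add: divide_simps) algebra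
qed

lemma PW2_s3:
  fixes q a x :: complex
  assumes "x \<noteq> 0" "q \<noteq> 0" "1 - q*x^2 \<noteq> 0"
    "1 - q^2*x \<noteq> 0" "1 - q^2*a \<noteq> 0" "1 - q \<noteq> 0" "1 - q*x \<noteq> 0"
  shows "q^2*a/((1-q^2*a)/(1-q))^2 + (-(q^2*a)*(1-q*x)^3*(q^2*a-x)/(q*x*(1-q*x^2)*(1-q^2*a)^3)) * hh q x
   = -(q^2*a/((1-q^2*a)/(1-q))^2)*q*(1-q*x)^3*(q^2*a-x)/((1-q*x^2)*(1-q^2*a)*(1-q^2*x)^2) - zz q a x"
  unfolding zz_def hh_def using assms by (simp add: divide_simps) algebra


definition H :: "complex \<Rightarrow> nat \<Rightarrow> complex" where
  "H q k = (\<Sum>i=1..2*k. (-1)^i * q^i / (qint q i)^2)"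
definition G :: "complex \<Rightarrow> nat \<Rightarrow> complex" where
  "G q n = (\<Sum>j=1..n. q^(2*j) / (qint q (2*j))^2)"
definition S0 :: "complex \<Rightarrow> nat \<Rightarrow> complex" where
  "S0 q n = qpoch q (q^2) n * qpoch (q^3) (q^2) n / (qpoch (q^2) (q^2) n)^2"

lemma S0_Suc:
  assumes q: "norm q < 1" "q \<noteq> 0"
  shows "S0 q (Suc n) = S0 q n * ((1-q*(q^2)^n)*(1-q^3*(q^2)^n)/(1-q^2*(q^2)^n)^2)"
proof -
  have nq2: "norm (q^2) < 1" using norm_pow_lt[OF q(1), of 2] by simp
  have B: "qpoch (q^2) (q^2) n \<noteq> 0" using qpoch_nz[OF nq2 less_imp_le[OF nq2]] .
  have na: "norm ((q^2)^n) \<le> 1" by (rule norm_pow_le, rule less_imp_le, rule nq2)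
  have f: "1 - q^2*(q^2)^n \<noteq> 0" using nzq(2)[OF q na] .
  show ?thesis unfolding S0_def qpoch_Suc by (simp add: times_divide_times_eq power_mult_distrib mult_ac)
qed

lemma H_Suc:
  assumes q: "norm q < 1" "q \<noteq> 0"
  shows "H q (Suc k) = H q k + hh q ((q^2)^k)"
proof -
  have q1: "q \<noteq> 1" using nz[OF q(1)] by simp
  have "{1..2*Suc k} = insert (Suc (Suc (2*k))) (insert (Suc (2*k)) {1..2*k})" by auto
  hence "H q (Suc k) = H q k + (-1)^(Suc (2*k)) * q^(Suc (2*k)) / (qint q (Suc (2*k)))^2
     + (-1)^(Suc (Suc (2*k))) * q^(Suc (Suc (2*k))) / (qint q (Suc (Suc (2*k))))^2"
    unfolding H_def by (simp add: algebra_simps)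
  also have "\<dots> = H q k + hh q ((q^2)^k)"
    unfolding hh_def qint_eq[OF q1]
    by (simp add: power_mult[symmetric] algebra_simps) (simp add: power2_eq_square mult_ac)
  finally show ?thesis .
qed

lemma G_Suc:
  assumes q: "norm q < 1" "q \<noteq> 0"
  shows "G q (Suc n) = G q n + q^2*(q^2)^n/((1-q^2*(q^2)^n)/(1-q))^2"
proof -
  have q1: "q \<noteq> 1" using nz[OF q(1)] by simp
  show ?thesis unfolding G_def qint_eq[OF q1]
    by (simp add: power_mult[symmetric] mult_2 power_add) (simp add: power2_eq_square mult_ac)
qed



lemma aux1: "(w::complex) - s*(w*g) = w*(1-s*g)" by algebra
lemma aux2: "(c1::complex)*(w*b) - c0*w = w*(c1*b - c0)" by algebra
lemma aux3: "(w::complex)*g + c1*(w*b)*h = w*(g + c1*b*h)" by algebra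

lemma NZ:
  fixes q a x :: complex
  assumes q: "norm q < 1" "q \<noteq> 0" and na: "norm a \<le> 1" and nx: "norm x \<le> 1"
  shows "1 - q*x^2 \<noteq> 0" "1 - q^5*x^2 \<noteq> 0" "1-q^2*x \<noteq> 0" "1-q^5*a*x \<noteq> 0" "1-q^3*a*x \<noteq> 0"
    "1-q*x \<noteq> 0" "1-q^2*a \<noteq> 0" "1-q^3*a \<noteq> 0" "1-q \<noteq> 0"
proof -
  have nx2: "norm (x^2) \<le> 1" using norm_pow_le[OF nx, of 2] .
  have nax: "norm (a*x) \<le> 1" using nx na by (simp add: norm_mult mult_le_one)
  show "1 - q*x^2 \<noteq> 0" using nzq(1)[OF q nx2] .
  show "1 - q^5*x^2 \<noteq> 0" using nzq(4)[OF q nx2] .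
  show "1 - q^2*x \<noteq> 0" using nzq(2)[OF q nx] .
  show "1 - q^5*a*x \<noteq> 0" using nzq(4)[OF q nax] by (simp add: mult.assoc)
  show "1 - q^3*a*x \<noteq> 0" using nzq(3)[OF q nax] by (simp add: mult.assoc)
  show "1 - q*x \<noteq> 0" using nzq(1)[OF q nx] .
  show "1 - q^2*a \<noteq> 0" using nzq(2)[OF q na] .
  show "1 - q^3*a \<noteq> 0" using nzq(3)[OF q na] .
  show "1 - q \<noteq> 0" using nz[OF q(1)] .
qed

lemma PW1_T:
  assumes q: "norm q < 1" "q \<noteq> 0" and a_def: "a = (q^2)^n" and x_def: "x = (q^2)^k"
  shows "T q (Suc n) k - ((1-q*a)*(1-q^3*a)/(1-q^2*a)^2) * T q n k
   = cc q a (q^2*x) * T q (Suc n) (Suc k) - cc q a x * T q (Suc n) k"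
proof -
  define w where "w = T q (Suc n) k"
  have nq2: "norm (q^2) < 1" using norm_pow_lt[OF q(1), of 2] by simp
  have nx: "norm x \<le> 1" unfolding x_def by (rule norm_pow_le, rule less_imp_le, rule nq2)
  have na: "norm a \<le> 1" unfolding a_def by (rule norm_pow_le, rule less_imp_le, rule nq2)
  note nzs = NZ[OF q na nx]
  have x0: "x \<noteq> 0" unfolding x_def using q(2) by simp
  have r2: "T q n k * x * (1 - q^2*a) * (1 - q^3*a) = w * (x - q^2*a) * (1 - q^3*a*x)"
    unfolding w_def a_def x_def using R2[OF q] .
  have den: "x*(1-q^2*a)*(1-q^3*a) \<noteq> 0" using x0 nzs by simp
  have "T q n k * (x*(1-q^2*a)*(1-q^3*a)) = w*((x-q^2*a)*(1-q^3*a*x))" using r2 by (simp add: mult_ac)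
  hence "T q n k = w*((x-q^2*a)*(1-q^3*a*x)) / (x*(1-q^2*a)*(1-q^3*a))" using den by (simp add: eq_divide_eq)
  hence tn: "T q n k = w * ((x-q^2*a)*(1-q^3*a*x)/(x*(1-q^2*a)*(1-q^3*a)))" by simp
  have ts: "T q (Suc n) (Suc k) = w * bb q a x"
    using T_Suc[OF q x_def, of "q^2*a" "Suc n"] unfolding w_def bb_def a_def
    by (simp add: mult.assoc)
  have pw: "1 - ((1-q*a)*(1-q^3*a)/(1-q^2*a)^2) * ((x-q^2*a)*(1-q^3*a*x)/(x*(1-q^2*a)*(1-q^3*a)))
     = cc q a (q^2*x) * bb q a x - cc q a x"
    unfolding cc_def bb_def by (rule PW1_rat; fact x0 q(2) nzs)
  show ?thesis unfolding tn ts w_def[symmetric] aux1 aux2 pw ..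
qed

lemma PW2_T:
  assumes q: "norm q < 1" "q \<noteq> 0" and a_def: "a = (q^2)^n" and x_def: "x = (q^2)^k"
  shows "T q (Suc n) k * (q^2*a/((1-q^2*a)/(1-q))^2) + cc q a (q^2*x) * T q (Suc n) (Suc k) * hh q x
   = zz q a (q^2*x) * T q (Suc n) (Suc k) - zz q a x * T q (Suc n) k"
proof -
  define w where "w = T q (Suc n) k"
  have nq2: "norm (q^2) < 1" using norm_pow_lt[OF q(1), of 2] by simp
  have nx: "norm x \<le> 1" unfolding x_def by (rule norm_pow_le, rule less_imp_le, rule nq2)
  have na: "norm a \<le> 1" unfolding a_def by (rule norm_pow_le, rule less_imp_le, rule nq2)
  note nzs = NZ[OF q na nx]
  have x0: "x \<noteq> 0" unfolding x_def using q(2) by simp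
  have ts: "T q (Suc n) (Suc k) = w * bb q a x"
    using T_Suc[OF q x_def, of "q^2*a" "Suc n"] unfolding w_def bb_def a_def
    by (simp add: mult.assoc)
  have s1: "cc q a (q^2*x) * bb q a x = -(q^2*a)*(1-q*x)^3*(q^2*a-x)/(q*x*(1-q*x^2)*(1-q^2*a)^3)"
    by (rule PW2_s1; fact x0 q(2) nzs)
  have s2: "zz q a (q^2*x) * bb q a x = -(q^2*a/((1-q^2*a)/(1-q))^2)*q*(1-q*x)^3*(q^2*a-x)/((1-q*x^2)*(1-q^2*a)*(1-q^2*x)^2)"
    by (rule PW2_s2; fact x0 q(2) nzs)
  have s3: "q^2*a/((1-q^2*a)/(1-q))^2 + (-(q^2*a)*(1-q*x)^3*(q^2*a-x)/(q*x*(1-q*x^2)*(1-q^2*a)^3)) * hh q x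
   = -(q^2*a/((1-q^2*a)/(1-q))^2)*q*(1-q*x)^3*(q^2*a-x)/((1-q*x^2)*(1-q^2*a)*(1-q^2*x)^2) - zz q a x"
    by (rule PW2_s3; fact x0 q(2) nzs)
  have pw: "q^2*a/((1-q^2*a)/(1-q))^2 + cc q a (q^2*x) * bb q a x * hh q x
      = zz q a (q^2*x) * bb q a x - zz q a x"
    using s3 unfolding s1[symmetric] s2[symmetric] .
  show ?thesis unfolding ts w_def[symmetric] aux3 aux2 pw ..
qed


lemma main_ind:
  assumes q: "norm q < 1" "q \<noteq> 0"
  shows "(\<Sum>k<Suc n. T q n k) = S0 q n \<and> (\<Sum>k<Suc n. T q n k * H q k) = S0 q n * G q n"
proof (induction n)
  case 0
  show ?case by (simp add: T_0 S0_def qpoch_def H_def G_def)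
next
  case (Suc n)
  have IA: "(\<Sum>k<Suc n. T q n k) = S0 q n" and IB: "(\<Sum>k<Suc n. T q n k * H q k) = S0 q n * G q n"
    using Suc.IH by auto
  define a where "a = (q^2)^n"
  define w where "w k = T q (Suc n) k" for k
  define D where "D k = cc q a ((q^2)^k) * w k" for k
  define Z where "Z k = zz q a ((q^2)^k) * w k" for k
  define SR where "SR = (1-q*a)*(1-q^3*a)/(1-q^2*a)^2"
  define gg where "gg = q^2*a/((1-q^2*a)/(1-q))^2"
  define M where "M = Suc (Suc n)"
  have p1: "w k - SR * T q n k = D (Suc k) - D k" for k
    using PW1_T[OF q a_def refl, of k] unfolding D_def w_def SR_def by simp
  have p2: "w k * gg + D (Suc k) * hh q ((q^2)^k) = Z (Suc k) - Z k" for k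
    using PW2_T[OF q a_def refl, of k] unfolding D_def Z_def w_def gg_def by simp
  have D0: "D 0 = 0" unfolding D_def cc_def by simp
  have Z0: "Z 0 = 0" unfolding Z_def zz_def by simp
  have wM: "w M = 0" unfolding w_def M_def using T_vanish[OF q(2)] by simp
  have DM: "D M = 0" unfolding D_def using wM by simp
  have ZM: "Z M = 0" unfolding Z_def using wM by simp
  have TnM: "T q n (Suc n) = 0" using T_vanish[OF q(2)] by simp
  have sT: "(\<Sum>k<M. T q n k) = S0 q n" unfolding M_def using IA TnM by simp
  have sTH: "(\<Sum>k<M. T q n k * H q k) = S0 q n * G q n" unfolding M_def using IB TnM by simp
  have S0S: "S0 q (Suc n) = S0 q n * SR" unfolding SR_def a_def using S0_Suc[OF q] .
  have GS: "G q (Suc n) = G q n + gg" unfolding gg_def a_def using G_Suc[OF q] .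
  have A1: "(\<Sum>k<M. w k - SR * T q n k) = 0"
    unfolding p1 sum_lessThan_telescope DM D0 by simp
  have A: "(\<Sum>k<M. w k) = S0 q (Suc n)"
  proof -
    have "(\<Sum>k<M. w k) - SR * (\<Sum>k<M. T q n k) = 0"
      using A1 by (simp add: sum_subtractf sum_distrib_left)
    thus ?thesis unfolding sT S0S by (simp add: mult.commute)
  qed
  have B1: "(\<Sum>k<M. w k * gg + D (Suc k) * hh q ((q^2)^k)) = 0"
    unfolding p2 sum_lessThan_telescope ZM Z0 by simp
  have B2: "(\<Sum>k<M. D (Suc k) * H q (Suc k) - D k * H q k) = 0"
    using sum_lessThan_telescope[of "\<lambda>k. D k * H q k" M] DM D0 by simp
  have B3: "D (Suc k) * H q (Suc k) - D k * H q k
       = (w k - SR * T q n k) * H q k + D (Suc k) * hh q ((q^2)^k)" for k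
    unfolding p1 H_Suc[OF q] by (simp add: algebra_simps)
  have B4: "(\<Sum>k<M. w k * H q k) - SR * (\<Sum>k<M. T q n k * H q k)
      + (\<Sum>k<M. D (Suc k) * hh q ((q^2)^k)) = 0"
    using B2 unfolding B3
    by (simp add: sum.distrib sum_subtractf sum_distrib_left algebra_simps)
  have B5: "gg * (\<Sum>k<M. w k) + (\<Sum>k<M. D (Suc k) * hh q ((q^2)^k)) = 0"
    using B1 by (simp add: sum.distrib sum_distrib_left mult.commute)
  have "(\<Sum>k<M. w k * H q k) = SR * (S0 q n * G q n) + gg * S0 q (Suc n)"
    using B4 B5 unfolding sTH A by algebra
  also have "\<dots> = S0 q (Suc n) * G q (Suc n)"
    unfolding S0S GS by (simp add: algebra_simps)
  finally have B: "(\<Sum>k<M. w k * H q k) = S0 q (Suc n) * G q (Suc n)" .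
  show ?case using A B unfolding w_def M_def by simp
qed


theorem mainTheorem10:
  fixes n :: nat and q :: complex
  assumes "n \<ge> 1" and "0 < norm q" and "norm q < 1"
  shows "(\<Sum>k=1..n. qint q (4*k+1)
            * (qpoch q (q^2) k)^3 / (qpoch (q^2) (q^2) k)^3
            * qpoch (inverse (q^(2*n))) (q^2) k / qpoch (q^(3+2*n)) (q^2) k
            * q^((1+2*n)*k)
            * (\<Sum>i=1..2*k. (-1)^i * q^i / (qint q i)^2))
       = qpoch q (q^2) n * qpoch (q^3) (q^2) n / (qpoch (q^2) (q^2) n)^2
            * (\<Sum>j=1..n. q^(2*j) / (qint q (2*j))^2)"
proof -
  have q0: "q \<noteq> 0" using assms(2) by auto
  have m: "(\<Sum>k<Suc n. T q n k * H q k) = S0 q n * G q n" using main_ind[OF assms(3) q0] by simp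
  have H0: "H q 0 = 0" unfolding H_def by simp
  have "{..<Suc n} = insert 0 {1..n}" by auto
  hence "(\<Sum>k=1..n. T q n k * H q k) = (\<Sum>k<Suc n. T q n k * H q k)" using H0 by simp
  with m have "(\<Sum>k=1..n. T q n k * H q k) = S0 q n * G q n" by simp
  thus ?thesis unfolding T_def H_def S0_def G_def .
qed


end
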